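(* Let $\mathcal F$ be a proper filter on $\omega$ and consider the game $\mathfrak G(\mathcal F,\omega,\mathcal F^* )$. Then (1) player I has a winning strategy if and only if $\mathcal F$ is countably generated; (2) player II has a winning strategy if and only if $\mathcal F$ is not $+$-Ramsey.
   Context: A filter on $\omega$ is a family $\mathcal F\subseteq\mathcal P(\omega)$ closed under finite intersections and supersets and containing all cofinite sets; it is proper if all its members are infinite. $\mathcal F^+=\{X\subseteq\omega:\omega\setminus X\notin\mathcal F\}$ and $\mathcal F^*=\mathcal P(\omega)\setminus\mathcal F^+$. $\mathcal F$ is countably generated if there is a countable $\mathcal B\subseteq\mathcal F$ such that every member of $\mathcal F$ contains a member of $\mathcal B$. Game $\mathfrak G(\mathcal X,\omega,\mathcal Z)$: at each stage $k\in\omega$, player I chooses $X_k\in\mathcal X$ and player II responds with $n_k\in X_k$; II wins if $\{n_k:k\in\omega\}\in\mathcal Z$, otherwise I wins. A tree is a set $T$ of finite sequences of natural numbers containing the empty sequence and closed under initial segments; it is an $\mathcal F^+$-tree if for each $\bar s\in T$ there is $X_{\bar s}\in\mathcal F^+$ with $\bar s^\frown n\in T$ for all $n\in X_{\bar s}$; a branch (infinite sequence all of whose initial segments lie in $T$) is in $\mathcal F^+$ if its set of values is in $\mathcal F^+$. $\mathcal F$ is $+$-Ramsey if every $\mathcal F^+$-tree has a branch in $\mathcal F^+$. *)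

theory Defs
  imports Main "HOL-Library.Countable_Set"
begin

definition is_filter :: "nat set set \<Rightarrow> bool" where
  "is_filter F \<longleftrightarrow>
     (\<forall>A B. A \<in> F \<and> B \<in> F \<longrightarrow> A \<inter> B \<in> F) \<and>
     (\<forall>A B. A \<in> F \<and> A \<subseteq> B \<longrightarrow> B \<in> F) \<and>
     (\<forall>A. finite (- A) \<longrightarrow> A \<in> F)"

definition proper_filter :: "nat set set \<Rightarrow> bool" where
  "proper_filter F \<longleftrightarrow> is_filter F \<and> (\<forall>A \<in> F. infinite A)"

definition fplus :: "nat set set \<Rightarrow> nat set set" where
  "fplus F = {X. - X \<notin> F}"

definition fstar :: "nat set set \<Rightarrow> nat set set" where
  "fstar F = UNIV - fplus F"

definition countably_generated :: "nat set set \<Rightarrow> bool" where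
  "countably_generated F \<longleftrightarrow>
     (\<exists>B. countable B \<and> B \<subseteq> F \<and> (\<forall>X \<in> F. \<exists>Y \<in> B. Y \<subseteq> X))"

text \<open>The game G(X, omega, Z): at stage k, I plays X_k in X, II answers n_k in X_k;
  II wins iff the set of all n_k is in Z.
  A strategy for I maps the finite sequence of II's previous moves to I's next move.
  A strategy for II maps the finite sequence of I's moves so far (including the current
  one) to II's answer.\<close>

definition I_strategy :: "nat set set \<Rightarrow> (nat list \<Rightarrow> nat set) \<Rightarrow> bool" where
  "I_strategy \<X> \<sigma> \<longleftrightarrow> (\<forall>s. \<sigma> s \<in> \<X>)"

definition I_winning :: "nat set set \<Rightarrow> nat set set \<Rightarrow> (nat list \<Rightarrow> nat set) \<Rightarrow> bool" where
  "I_winning \<X> \<Z> \<sigma> \<longleftrightarrow> I_strategy \<X> \<sigma> \<and>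
     (\<forall>n :: nat \<Rightarrow> nat. (\<forall>k. n k \<in> \<sigma> (map n [0..<k])) \<longrightarrow> range n \<notin> \<Z>)"

definition II_strategy :: "nat set set \<Rightarrow> (nat set list \<Rightarrow> nat) \<Rightarrow> bool" where
  "II_strategy \<X> \<tau> \<longleftrightarrow>
     (\<forall>Xs X. set Xs \<subseteq> \<X> \<and> X \<in> \<X> \<longrightarrow> \<tau> (Xs @ [X]) \<in> X)"

definition II_winning :: "nat set set \<Rightarrow> nat set set \<Rightarrow> (nat set list \<Rightarrow> nat) \<Rightarrow> bool" where
  "II_winning \<X> \<Z> \<tau> \<longleftrightarrow> II_strategy \<X> \<tau> \<and>
     (\<forall>X :: nat \<Rightarrow> nat set. (\<forall>k. X k \<in> \<X>) \<longrightarrow>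
        range (\<lambda>k. \<tau> (map X [0..<Suc k])) \<in> \<Z>)"

definition is_tree :: "nat list set \<Rightarrow> bool" where
  "is_tree T \<longleftrightarrow> [] \<in> T \<and> (\<forall>s \<in> T. \<forall>k. take k s \<in> T)"

definition fplus_tree :: "nat set set \<Rightarrow> nat list set \<Rightarrow> bool" where
  "fplus_tree F T \<longleftrightarrow> is_tree T \<and>
     (\<forall>s \<in> T. \<exists>X \<in> fplus F. \<forall>n \<in> X. s @ [n] \<in> T)"

definition branch :: "nat list set \<Rightarrow> (nat \<Rightarrow> nat) \<Rightarrow> bool" where
  "branch T b \<longleftrightarrow> (\<forall>k. map b [0..<k] \<in> T)"

definition plus_Ramsey :: "nat set set \<Rightarrow> bool" where
  "plus_Ramsey F \<longleftrightarrow>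
     (\<forall>T. fplus_tree F T \<longrightarrow> (\<exists>b. branch T b \<and> range b \<in> fplus F))"

end

theory Submission
  imports Defs
begin

lemma fstar_iff: "X \<in> fstar F \<longleftrightarrow> - X \<in> F"
  by (simp add: fstar_def fplus_def)

lemma part1a:
  assumes "is_filter F" "countably_generated F"
  shows "\<exists>\<sigma>. I_winning F (fstar F) \<sigma>"
proof -
  obtain B where B: "countable B" "B \<subseteq> F" "\<forall>X\<in>F. \<exists>Y\<in>B. Y \<subseteq> X"
    using assms(2) unfolding countably_generated_def by blast
  have "UNIV \<in> F" using assms(1) unfolding is_filter_def by simp
  then have Bne: "B \<noteq> {}" using B(3) by blast
  define \<sigma> where "\<sigma> s = from_nat_into B (length s)" for s :: "nat list"
  have "I_winning F (fstar F) \<sigma>"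
    unfolding I_winning_def I_strategy_def
  proof (intro conjI allI impI)
    show "\<sigma> s \<in> F" for s using from_nat_into[OF Bne] B(2) unfolding \<sigma>_def by blast
    fix n :: "nat \<Rightarrow> nat"
    assume h: "\<forall>k. n k \<in> \<sigma> (map n [0..<k])"
    show "range n \<notin> fstar F"
    proof
      assume "range n \<in> fstar F"
      then have "- range n \<in> F" by (simp add: fstar_iff)
      then obtain Y where Y: "Y \<in> B" "Y \<subseteq> - range n" using B(3) by blast
      obtain j where j: "from_nat_into B j = Y" using from_nat_into_surj[OF B(1) Y(1)] by blast
      have "n j \<in> Y" using h[rule_format, of j] j unfolding \<sigma>_def by simp
      then show False using Y(2) by blast
    qed
  qed
  then show ?thesis by blast
qed

lemma part1b:
  assumes "is_filter F" "I_winning F (fstar F) \<sigma>"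
  shows "countably_generated F"
  unfolding countably_generated_def
proof (intro exI conjI ballI)
  show "countable (range \<sigma>)" by simp
  show "range \<sigma> \<subseteq> F" using assms(2) unfolding I_winning_def I_strategy_def by blast
  fix X assume X: "X \<in> F"
  show "\<exists>Y\<in>range \<sigma>. Y \<subseteq> X"
  proof (rule ccontr)
    assume "\<not> ?thesis"
    then have ne: "\<forall>s. \<exists>m. m \<in> \<sigma> s - X" by blast
    define c where "c s = (SOME m. m \<in> \<sigma> s - X)" for s
    have c: "c s \<in> \<sigma> s - X" for s unfolding c_def using ne someI_ex by metis
    define f where "f k = rec_nat [] (\<lambda>k s. s @ [c s]) k" for k
    have f0: "f 0 = []" and fS: "f (Suc k) = f k @ [c (f k)]" for k by (simp_all add: f_def)
    define n where "n k = c (f k)" for k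
    have fm: "map n [0..<k] = f k" for k
      by (induction k) (simp_all add: f0 fS n_def)
    have "\<forall>k. n k \<in> \<sigma> (map n [0..<k])" using c fm n_def by auto
    then have "range n \<notin> fstar F" using assms(2) unfolding I_winning_def by blast
    moreover have "X \<subseteq> - range n" using c n_def by auto
    then have "- range n \<in> F" using X assms(1) unfolding is_filter_def by blast
    ultimately show False by (simp add: fstar_iff)
  qed
qed

lemma meet_plus:
  assumes "is_filter F" "X \<in> F" "Y \<in> fplus F"
  shows "X \<inter> Y \<noteq> {}"
proof
  assume "X \<inter> Y = {}"
  then have "X \<subseteq> - Y" by blast
  then have "- Y \<in> F" using assms(1,2) unfolding is_filter_def by blast
  then show False using assms(3) by (simp add: fplus_def)
qed

lemma part2a:
  assumes "is_filter F" "\<not> plus_Ramsey F"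
  shows "\<exists>\<tau>. II_winning F (fstar F) \<tau>"
proof -
  obtain T where T: "fplus_tree F T" and nb: "\<forall>b. branch T b \<longrightarrow> range b \<notin> fplus F"
    using assms(2) unfolding plus_Ramsey_def by blast
  have tree: "is_tree T" using T unfolding fplus_tree_def by blast
  have ex: "\<exists>m. m \<in> X \<and> s @ [m] \<in> T" if "s \<in> T" "X \<in> F" for s X
  proof -
    have "\<forall>s \<in> T. \<exists>X \<in> fplus F. \<forall>n \<in> X. s @ [n] \<in> T" using T unfolding fplus_tree_def by (rule conjunct2)
    then have "\<exists>X \<in> fplus F. \<forall>n \<in> X. s @ [n] \<in> T" using that(1) by (rule bspec)
    then obtain Y where Y: "Y \<in> fplus F" "\<forall>n\<in>Y. s @ [n] \<in> T" by (rule bexE) simp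
    have "X \<inter> Y \<noteq> {}" using meet_plus[OF assms(1) that(2) Y(1)] .
    then obtain m where "m \<in> X" "m \<in> Y" by blast
    then have "s @ [m] \<in> T" using Y(2) by simp
    then show ?thesis using \<open>m \<in> X\<close> by (intro exI[of _ m]) simp
  qed
  define pick where "pick s X = (SOME m. m \<in> X \<and> s @ [m] \<in> T)" for s X
  have pick: "pick s X \<in> X \<and> s @ [pick s X] \<in> T" if "s \<in> T" "X \<in> F" for s X
    unfolding pick_def using someI_ex[OF ex[OF that]] .
  define node where "node Xs = foldl (\<lambda>s X. s @ [pick s X]) [] Xs" for Xs
  have node_snoc: "node (Xs @ [X]) = node Xs @ [pick (node Xs) X]" for Xs X
    by (simp add: node_def)
  have node_T: "set Xs \<subseteq> F \<Longrightarrow> node Xs \<in> T" for Xs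
  proof (induction Xs rule: rev_induct)
    case Nil then show ?case using tree by (simp add: node_def is_tree_def)
  next
    case (snoc X Xs)
    then have "node Xs \<in> T" "X \<in> F" by auto
    then show ?case using pick[of "node Xs" X] unfolding node_snoc by blast
  qed
  define \<tau> where "\<tau> L = last (node L)" for L
  have tau_snoc: "\<tau> (Xs @ [X]) = pick (node Xs) X" for Xs X by (simp add: \<tau>_def node_snoc)
  have "II_winning F (fstar F) \<tau>"
    unfolding II_winning_def II_strategy_def
  proof (intro conjI allI impI)
    fix Xs X assume "set Xs \<subseteq> F \<and> X \<in> F"
    then have "node Xs \<in> T" "X \<in> F" using node_T by auto
    then show "\<tau> (Xs @ [X]) \<in> X" using pick[of "node Xs" X] unfolding tau_snoc by blast
  next
    fix X :: "nat \<Rightarrow> nat set" assume XF: "\<forall>k. X k \<in> F"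
    define b where "b k = \<tau> (map X [0..<Suc k])" for k
    have bn: "node (map X [0..<k]) = map b [0..<k]" for k
    proof (induction k)
      case 0 then show ?case by (simp add: node_def)
    next
      case (Suc k)
      have "node (map X [0..<Suc k]) = node (map X [0..<k]) @ [pick (node (map X [0..<k])) (X k)]"
        using node_snoc by simp
      moreover have "b k = pick (node (map X [0..<k])) (X k)"
        unfolding b_def using tau_snoc[of "map X [0..<k]" "X k"] by simp
      ultimately show ?case using Suc.IH by simp
    qed
    have "branch T b" unfolding branch_def
    proof
      fix k
      have "set (map X [0..<k]) \<subseteq> F" using XF by auto
      then have "node (map X [0..<k]) \<in> T" by (rule node_T)
      then show "map b [0..<k] \<in> T" unfolding bn .
    qed
    then have "range b \<notin> fplus F" using nb by blast
    then show "range (\<lambda>k. \<tau> (map X [0..<Suc k])) \<in> fstar F"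
      unfolding b_def[symmetric] fstar_def by blast
  qed
  then show ?thesis by blast
qed

lemma part2b:
  assumes "is_filter F" "II_winning F (fstar F) \<tau>"
  shows "\<not> plus_Ramsey F"
proof -
  have strat: "\<tau> (Xs @ [X]) \<in> X" if "set Xs \<subseteq> F" "X \<in> F" for Xs X
    using assms(2) that unfolding II_winning_def II_strategy_def by blast
  have win: "range (\<lambda>k. \<tau> (map X [0..<Suc k])) \<in> fstar F" if "\<forall>k. X k \<in> F" for X
    using assms(2) that unfolding II_winning_def by blast
  define ch where "ch P n = (SOME X. X \<in> F \<and> \<tau> (P @ [X]) = n)" for P n
  have ch: "ch P n \<in> F \<and> \<tau> (P @ [ch P n]) = n" if "\<exists>X\<in>F. \<tau> (P @ [X]) = n" for P n
  proof -
    have "\<exists>X. X \<in> F \<and> \<tau> (P @ [X]) = n" using that by blast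
    then show ?thesis unfolding ch_def by (rule someI_ex)
  qed
  define play where "play s = foldl (\<lambda>P n. P @ [ch P n]) [] s" for s
  have play_snoc: "play (s @ [n]) = play s @ [ch (play s) n]" for s n
    by (simp add: play_def)
  define T where "T = {s. \<forall>k<length s. \<exists>X\<in>F. \<tau> (play (take k s) @ [X]) = s ! k}"
  have T_snoc: "s @ [n] \<in> T \<longleftrightarrow> s \<in> T \<and> (\<exists>X\<in>F. \<tau> (play s @ [X]) = n)" for s n
  proof
    assume h: "s @ [n] \<in> T"
    have "s \<in> T" unfolding T_def
    proof (intro CollectI allI impI)
      fix k assume k: "k < length s"
      have "\<exists>X\<in>F. \<tau> (play (take k (s @ [n])) @ [X]) = (s @ [n]) ! k"
        using h k unfolding T_def by simp
      then show "\<exists>X\<in>F. \<tau> (play (take k s) @ [X]) = s ! k" using k by (simp add: nth_append)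
    qed
    moreover have "\<exists>X\<in>F. \<tau> (play (take (length s) (s @ [n])) @ [X]) = (s @ [n]) ! length s"
      using h unfolding T_def mem_Collect_eq by (elim allE[of _ "length s"]) simp
    then have "\<exists>X\<in>F. \<tau> (play s @ [X]) = n" by simp
    ultimately show "s \<in> T \<and> (\<exists>X\<in>F. \<tau> (play s @ [X]) = n)" by simp
  next
    assume h: "s \<in> T \<and> (\<exists>X\<in>F. \<tau> (play s @ [X]) = n)"
    show "s @ [n] \<in> T" unfolding T_def
    proof (intro CollectI allI impI)
      fix k assume k: "k < length (s @ [n])"
      show "\<exists>X\<in>F. \<tau> (play (take k (s @ [n])) @ [X]) = (s @ [n]) ! k"
      proof (cases "k < length s")
        case True
        then have "\<exists>X\<in>F. \<tau> (play (take k s) @ [X]) = s ! k" using h unfolding T_def by simp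
        then show ?thesis using True by (simp add: nth_append)
      next
        case False
        then have "k = length s" using k by simp
        then show ?thesis using h by simp
      qed
    qed
  qed
  have tree: "is_tree T" unfolding is_tree_def
  proof (intro conjI ballI allI)
    show "[] \<in> T" unfolding T_def by simp
    fix s j assume s: "s \<in> T"
    show "take j s \<in> T" unfolding T_def
    proof (intro CollectI allI impI)
      fix k assume k: "k < length (take j s)"
      then have "k < length s" "k < j" by auto
      then have "\<exists>X\<in>F. \<tau> (play (take k s) @ [X]) = s ! k" using s unfolding T_def by simp
      then show "\<exists>X\<in>F. \<tau> (play (take k (take j s)) @ [X]) = take j s ! k"
        using \<open>k < j\<close> by (simp add: min_def)
    qed
  qed
  have play_F: "s \<in> T \<Longrightarrow> set (play s) \<subseteq> F" for s
  proof (induction s rule: rev_induct)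
    case Nil then show ?case by (simp add: play_def)
  next
    case (snoc n s)
    then have "s \<in> T" "\<exists>X\<in>F. \<tau> (play s @ [X]) = n" using T_snoc by auto
    then show ?case using snoc.IH ch[of "play s" n] by (simp add: play_snoc)
  qed
  have ftree: "fplus_tree F T" unfolding fplus_tree_def
  proof (intro conjI ballI)
    show "is_tree T" by (rule tree)
    fix s assume s: "s \<in> T"
    define A where "A = (\<lambda>X. \<tau> (play s @ [X])) ` F"
    have "A \<in> fplus F" unfolding fplus_def
    proof (intro CollectI notI)
      assume "- A \<in> F"
      then have "\<tau> (play s @ [- A]) \<in> - A" using strat play_F[OF s] by blast
      moreover have "\<tau> (play s @ [- A]) \<in> (\<lambda>X. \<tau> (play s @ [X])) ` F" using \<open>- A \<in> F\<close> by (rule imageI)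
      then have "\<tau> (play s @ [- A]) \<in> A" unfolding A_def .
      ultimately show False by blast
    qed
    moreover have "\<forall>n\<in>A. s @ [n] \<in> T" unfolding A_def using T_snoc s by blast
    ultimately show "\<exists>X\<in>fplus F. \<forall>n\<in>X. s @ [n] \<in> T" by blast
  qed
  have nob: "range b \<notin> fplus F" if b: "branch T b" for b
  proof -
    define X where "X k = ch (play (map b [0..<k])) (b k)" for k
    have Xk: "X k \<in> F \<and> \<tau> (play (map b [0..<k]) @ [X k]) = b k" for k
    proof -
      have "map b [0..<k] @ [b k] \<in> T" using b unfolding branch_def
        by (metis map_append map_upt_Suc list.map(1) list.map(2) upt_Suc_append le0 upt_Suc)
      then have "\<exists>Y\<in>F. \<tau> (play (map b [0..<k]) @ [Y]) = b k" using T_snoc by blast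
      then show ?thesis unfolding X_def by (rule ch)
    qed
    have pm: "play (map b [0..<k]) = map X [0..<k]" for k
    proof (induction k)
      case 0 then show ?case by (simp add: play_def)
    next
      case (Suc k)
      have "play (map b [0..<Suc k]) = play (map b [0..<k]) @ [ch (play (map b [0..<k])) (b k)]"
        using play_snoc by simp
      then show ?case using Suc.IH by (simp add: X_def)
    qed
    have "\<forall>k. X k \<in> F" using Xk by blast
    then have "range (\<lambda>k. \<tau> (map X [0..<Suc k])) \<in> fstar F" by (rule win)
    moreover have "(\<lambda>k. \<tau> (map X [0..<Suc k])) = b"
    proof
      fix k
      have "map X [0..<Suc k] = play (map b [0..<k]) @ [X k]" using pm by simp
      then show "\<tau> (map X [0..<Suc k]) = b k" using Xk by simp
    qed
    ultimately have "range b \<in> fstar F" by (simp only:)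
    then show ?thesis unfolding fstar_def by simp
  qed
  show ?thesis unfolding plus_Ramsey_def using ftree nob by blast
qed

theorem theorem2p9:
  fixes F :: "nat set set"
  assumes "proper_filter F"
  shows "((\<exists>\<sigma>. I_winning F (fstar F) \<sigma>) \<longleftrightarrow> countably_generated F) \<and>
         ((\<exists>\<tau>. II_winning F (fstar F) \<tau>) \<longleftrightarrow> \<not> plus_Ramsey F)"
proof -
  have fil: "is_filter F" using assms unfolding proper_filter_def by blast
  show ?thesis using part1a[OF fil] part1b[OF fil] part2a[OF fil] part2b[OF fil] by blast
qed

end
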